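(* Let $X$ be a uniformly smooth Banach space, let $S\subset X$ be a nonempty bounded set, and let $a\in\operatorname{conv} S$. Then there exists a sequence $\{x_i\}_{i=1}^\infty\subset S$ such that, for every $k\in\mathbb{N}$, the vector $a_k=\frac1k\sum_{i=1}^k x_i$ satisfies $$\|a-a_k\|\le \frac{2e^2}{k\,\rho_X^{-1}(1/k)}\,\operatorname{diam} S .$$
   Context: The modulus of smoothness of a Banach space $X$ is $\rho_X(\tau)=\sup\{\tfrac12(\|x+\tau y\|+\|x-\tau y\|)-1 : \|x\|=\|y\|=1\}$ for $\tau\ge 0$. $X$ is uniformly smooth if $\rho_X(t)=o(t)$ as $t\to0$. The function $\rho_X$ is convex, strictly increasing and continuous on $[0,\infty)$, with $\rho_X(0)=0$, and it satisfies $\sqrt{1+\tau^2}-1\le\rho_X(\tau)$. Consequently it is a bijection of $[0,\infty)$ onto itself, and $\rho_X^{-1}$ denotes its inverse function. $\operatorname{conv} S$ is the convex hull of $S$, and $\operatorname{diam} S=\sup_{x,y\in S}\|x-y\|$. *)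

theory Defs
  imports "HOL-Analysis.Analysis"
begin

definition modulus_smoothness :: "'a::real_normed_vector itself \<Rightarrow> real \<Rightarrow> real" where
  "modulus_smoothness _ \<tau> =
     (SUP p \<in> {(x::'a, y::'a). norm x = 1 \<and> norm y = 1}.
        (norm (fst p + \<tau> *\<^sub>R snd p) + norm (fst p - \<tau> *\<^sub>R snd p)) / 2 - 1)"

definition modulus_smoothness_inv :: "'a::real_normed_vector itself \<Rightarrow> real \<Rightarrow> real" where
  "modulus_smoothness_inv X t = (THE s. 0 \<le> s \<and> modulus_smoothness X s = t)"

definition uniformly_smooth :: "'a::real_normed_vector itself \<Rightarrow> bool" where
  "uniformly_smooth X \<longleftrightarrow> ((\<lambda>t. modulus_smoothness X t / t) \<longlongrightarrow> 0) (at_right 0)"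

end

theory Submission
  imports Defs
begin

lemma ms_term_bound:
  fixes x y :: "'a::real_normed_vector"
  assumes "norm x = 1" "norm y = 1"
  shows "(norm (x + \<tau> *\<^sub>R y) + norm (x - \<tau> *\<^sub>R y))/2 - 1 \<le> \<bar>\<tau>\<bar>"
proof -
  have "norm (x + \<tau> *\<^sub>R y) \<le> 1 + \<bar>\<tau>\<bar>" using norm_triangle_ineq[of x "\<tau> *\<^sub>R y"] assms by simp
  moreover have "norm (x - \<tau> *\<^sub>R y) \<le> 1 + \<bar>\<tau>\<bar>" using norm_triangle_ineq4[of x "\<tau> *\<^sub>R y"] assms by simp
  ultimately show ?thesis by argo
qed

lemma ms_bdd: "bdd_above ((\<lambda>p. (norm (fst p + \<tau> *\<^sub>R snd p) + norm (fst p - \<tau> *\<^sub>R snd p))/2 - 1)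
   ` {(x::'a::real_normed_vector, y::'a). norm x = 1 \<and> norm y = 1})"
  by (rule bdd_aboveI[where M="\<bar>\<tau>\<bar>"]) (auto intro: ms_term_bound)

lemma ms_upper:
  fixes x y :: "'a::real_normed_vector"
  assumes "norm x = 1" "norm y = 1"
  shows "(norm (x + \<tau> *\<^sub>R y) + norm (x - \<tau> *\<^sub>R y))/2 - 1 \<le> modulus_smoothness TYPE('a) \<tau>"
  unfolding modulus_smoothness_def
  using cSUP_upper[OF _ ms_bdd, of "(x,y)" \<tau>] assms by simp

lemma ms_least:
  fixes u :: "'a::real_normed_vector"
  assumes "u \<noteq> 0"
   and "\<And>x y::'a. norm x = 1 \<Longrightarrow> norm y = 1 \<Longrightarrow> (norm (x + \<tau> *\<^sub>R y) + norm (x - \<tau> *\<^sub>R y))/2 - 1 \<le> M"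
  shows "modulus_smoothness TYPE('a) \<tau> \<le> M"
  unfolding modulus_smoothness_def
proof (rule cSUP_least)
  have "(sgn u, sgn u) \<in> {(x::'a, y::'a). norm x = 1 \<and> norm y = 1}" using assms(1) by (simp add: norm_sgn)
  then show "{(x::'a, y::'a). norm x = 1 \<and> norm y = 1} \<noteq> {}" by blast
qed (use assms(2) in auto)

lemma ms_lower:
  fixes u :: "'a::real_normed_vector"
  assumes "u \<noteq> 0"
  shows "\<bar>\<tau>\<bar> - 1 \<le> modulus_smoothness TYPE('a) \<tau>" "0 \<le> modulus_smoothness TYPE('a) \<tau>"
proof -
  have n: "norm (sgn u) = 1" using assms by (simp add: norm_sgn)
  have "sgn u + \<tau> *\<^sub>R sgn u = (1+\<tau>) *\<^sub>R sgn u" "sgn u - \<tau> *\<^sub>R sgn u = (1-\<tau>) *\<^sub>R sgn u"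
    by (simp_all add: algebra_simps)
  then have e: "(norm (sgn u + \<tau> *\<^sub>R sgn u) + norm (sgn u - \<tau> *\<^sub>R sgn u))/2 - 1
      = (\<bar>1+\<tau>\<bar> + \<bar>1-\<tau>\<bar>)/2 - 1" using n by simp
  have le: "(norm (sgn u + \<tau> *\<^sub>R sgn u) + norm (sgn u - \<tau> *\<^sub>R sgn u))/2 - 1 \<le> modulus_smoothness TYPE('a) \<tau>"
    by (rule ms_upper[OF n n])
  show "\<bar>\<tau>\<bar> - 1 \<le> modulus_smoothness TYPE('a) \<tau>" using le unfolding e by argo
  show "0 \<le> modulus_smoothness TYPE('a) \<tau>" using le unfolding e by argo
qed

lemma ms_zero:
  fixes u :: "'a::real_normed_vector"
  assumes "u \<noteq> 0"
  shows "modulus_smoothness TYPE('a) 0 = 0"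
  using ms_least[OF assms, of 0 0] ms_lower(2)[OF assms, of 0] by (auto simp: order_antisym)

lemma ms_key:
  fixes u v :: "'a::real_normed_vector"
  assumes "u \<noteq> 0"
  shows "norm (u + v) + norm (u - v) \<le> 2 * norm u * (1 + modulus_smoothness TYPE('a) (norm v / norm u))"
proof (cases "v = 0")
  case True
  then show ?thesis using ms_lower(2)[OF assms, of 0] assms by simp
next
  case False
  have nu: "norm u > 0" using assms by simp
  have nv: "norm v > 0" using False by simp
  have "u + v = norm u *\<^sub>R (sgn u + (norm v / norm u) *\<^sub>R sgn v)"
    using nu nv by (simp add: sgn_div_norm scaleR_add_right algebra_simps)
  then have e1: "norm (u + v) = norm u * norm (sgn u + (norm v / norm u) *\<^sub>R sgn v)" by simp
  have "u - v = norm u *\<^sub>R (sgn u - (norm v / norm u) *\<^sub>R sgn v)"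
    using nu nv by (simp add: sgn_div_norm scaleR_diff_right algebra_simps)
  then have e2: "norm (u - v) = norm u * norm (sgn u - (norm v / norm u) *\<^sub>R sgn v)" by simp
  have "(norm (sgn u + (norm v / norm u) *\<^sub>R sgn v) + norm (sgn u - (norm v / norm u) *\<^sub>R sgn v))/2 - 1
     \<le> modulus_smoothness TYPE('a) (norm v / norm u)"
    by (rule ms_upper) (use assms False in \<open>simp_all add: norm_sgn\<close>)
  then have "norm (sgn u + (norm v / norm u) *\<^sub>R sgn v) + norm (sgn u - (norm v / norm u) *\<^sub>R sgn v)
     \<le> 2 * (1 + modulus_smoothness TYPE('a) (norm v / norm u))" by argo
  from mult_left_mono[OF this, of "norm u"] show ?thesis
    unfolding e1 e2 by (simp add: algebra_simps)
qed

lemma ms_scale: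
  fixes u :: "'a::real_normed_vector"
  assumes "u \<noteq> 0" "0 \<le> s" "s \<le> t" "0 < t"
  shows "modulus_smoothness TYPE('a) s \<le> (s / t) * modulus_smoothness TYPE('a) t"
proof (rule ms_least[OF assms(1)])
  fix x y :: 'a assume x: "norm x = 1" and y: "norm y = 1"
  define \<mu> where "\<mu> = s / t"
  have \<mu>: "0 \<le> \<mu>" "\<mu> \<le> 1" using assms by (auto simp: \<mu>_def)
  have "x + s *\<^sub>R y = \<mu> *\<^sub>R (x + t *\<^sub>R y) + (1 - \<mu>) *\<^sub>R x"
    using assms by (simp add: \<mu>_def algebra_simps)
  then have A: "norm (x + s *\<^sub>R y) \<le> \<mu> * norm (x + t *\<^sub>R y) + (1 - \<mu>)"
    using norm_triangle_ineq[of "\<mu> *\<^sub>R (x + t *\<^sub>R y)" "(1 - \<mu>) *\<^sub>R x"] \<mu> x by simp have "x - s *\<^sub>R y = \<mu> *\<^sub>R (x - t *\<^sub>R y) + (1 - \<mu>) *\<^sub>R x"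
    using assms by (simp add: \<mu>_def algebra_simps)
  then have B: "norm (x - s *\<^sub>R y) \<le> \<mu> * norm (x - t *\<^sub>R y) + (1 - \<mu>)"
    using norm_triangle_ineq[of "\<mu> *\<^sub>R (x - t *\<^sub>R y)" "(1 - \<mu>) *\<^sub>R x"] \<mu> x by simp
  have C: "\<mu> * ((norm (x + t *\<^sub>R y) + norm (x - t *\<^sub>R y))/2 - 1)
     = (\<mu> * norm (x + t *\<^sub>R y) + \<mu> * norm (x - t *\<^sub>R y))/2 - \<mu>" by (simp add: field_simps)
  have "(norm (x + s *\<^sub>R y) + norm (x - s *\<^sub>R y))/2 - 1
      \<le> \<mu> * ((norm (x + t *\<^sub>R y) + norm (x - t *\<^sub>R y))/2 - 1)"
    unfolding C using A B by argo
  also have "\<dots> \<le> \<mu> * modulus_smoothness TYPE('a) t"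
    by (rule mult_left_mono[OF ms_upper[OF x y] \<mu>(1)])
  finally show "(norm (x + s *\<^sub>R y) + norm (x - s *\<^sub>R y))/2 - 1 \<le> s / t * modulus_smoothness TYPE('a) t"
    by (simp add: \<mu>_def)
qed

lemma ms_mono:
  fixes u :: "'a::real_normed_vector"
  assumes "u \<noteq> 0" "0 \<le> s" "s \<le> t"
  shows "modulus_smoothness TYPE('a) s \<le> modulus_smoothness TYPE('a) t"
proof (cases "t = 0")
  case True then show ?thesis using assms by simp
next
  case False
  then have t: "0 < t" using assms by simp
  have "modulus_smoothness TYPE('a) s \<le> (s / t) * modulus_smoothness TYPE('a) t"
    by (rule ms_scale[OF assms t])
  also have "\<dots> \<le> 1 * modulus_smoothness TYPE('a) t"
    by (rule mult_right_mono) (use assms t ms_lower(2)[OF assms(1)] in auto)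
  finally show ?thesis by simp
qed

lemma ms_lip:
  fixes u :: "'a::real_normed_vector"
  assumes "u \<noteq> 0"
  shows "modulus_smoothness TYPE('a) s \<le> modulus_smoothness TYPE('a) t + \<bar>s - t\<bar>"
proof (rule ms_least[OF assms(1)])
  fix x y :: 'a assume x: "norm x = 1" and y: "norm y = 1"
  have e1: "(x + t *\<^sub>R y) + (s - t) *\<^sub>R y = x + s *\<^sub>R y" by (simp add: algebra_simps)
  have e2: "(x - t *\<^sub>R y) - (s - t) *\<^sub>R y = x - s *\<^sub>R y" by (simp add: algebra_simps)
  have "norm (x + s *\<^sub>R y) \<le> norm (x + t *\<^sub>R y) + \<bar>s - t\<bar>"
    using norm_triangle_ineq[of "x + t *\<^sub>R y" "(s - t) *\<^sub>R y"] y unfolding e1 by simp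
  moreover have "norm (x - s *\<^sub>R y) \<le> norm (x - t *\<^sub>R y) + \<bar>s - t\<bar>"
    using norm_triangle_ineq4[of "x - t *\<^sub>R y" "(s - t) *\<^sub>R y"] y unfolding e2 by simp
  ultimately have "(norm (x + s *\<^sub>R y) + norm (x - s *\<^sub>R y))/2 - 1
      \<le> ((norm (x + t *\<^sub>R y) + norm (x - t *\<^sub>R y))/2 - 1) + \<bar>s - t\<bar>" by argo
  also have "\<dots> \<le> modulus_smoothness TYPE('a) t + \<bar>s - t\<bar>" using ms_upper[OF x y, of t] by simp
  finally show "(norm (x + s *\<^sub>R y) + norm (x - s *\<^sub>R y))/2 - 1 \<le> modulus_smoothness TYPE('a) t + \<bar>s - t\<bar>" .
qed

lemma aux_contra:
  fixes r :: "real \<Rightarrow> real"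
  assumes "0 \<le> a" "a < b" "r a \<le> (a/b) * r b" "r a = c" "r b = c" "0 < c"
  shows False
proof -
  have b: "0 < b" using assms by linarith
  have q: "a/b < 1" using assms(2) b by (simp add: divide_less_eq)
  have "(a/b) * c < 1 * c" using mult_strict_right_mono[OF q assms(6)] .
  then show False using assms(3) unfolding assms(4) assms(5) by linarith
qed

lemma ms_inv:
  fixes u :: "'a::real_normed_vector"
  assumes "u \<noteq> 0" "0 < c"
  shows "0 \<le> modulus_smoothness_inv TYPE('a) c \<and> modulus_smoothness TYPE('a) (modulus_smoothness_inv TYPE('a) c) = c"
proof -
  let ?r = "modulus_smoothness TYPE('a)"
  have cont: "continuous_on {0..c+1} ?r"
  proof (rule lipschitz_on_continuous_on[of 1])
    show "1-lipschitz_on {0..c+1} ?r"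
    proof (rule lipschitz_onI)
      fix s t :: real
      show "dist (?r s) (?r t) \<le> 1 * dist s t"
        using ms_lip[OF assms(1), of s t] ms_lip[OF assms(1), of t s]
        by (simp add: dist_real_def abs_le_iff abs_minus_commute)
    qed simp
  qed
  have h1: "?r 0 \<le> c" using ms_zero[OF assms(1)] assms by simp
  have h2: "c \<le> ?r (c+1)" using ms_lower(1)[OF assms(1), of "c+1"] assms by simp
  have h3: "(0::real) \<le> c + 1" using assms by simp
  obtain s where s: "0 \<le> s" "?r s = c"
    using IVT'[OF h1 h2 h3 cont] by blast
  have uniq: "s' = s" if "0 \<le> s'" "?r s' = c" for s'
  proof (rule ccontr)
    assume "s' \<noteq> s"
    then consider "s' < s" | "s < s'" by linarith
    then show False
    proof cases
      case 1
      have "?r s' \<le> (s'/s) * ?r s" by (rule ms_scale[OF assms(1) that(1) less_imp_le[OF 1]]) (use 1 that(1) in linarith)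
      from aux_contra[OF that(1) 1 this that(2) s(2) assms(2)] show False .
    next
      case 2
      have "?r s \<le> (s/s') * ?r s'" by (rule ms_scale[OF assms(1) s(1) less_imp_le[OF 2]]) (use 2 s(1) in linarith)
      from aux_contra[OF s(1) 2 this s(2) that(2) assms(2)] show False .
    qed
  qed
  have "modulus_smoothness_inv TYPE('a) c = s"
    unfolding modulus_smoothness_inv_def
  proof (rule the_equality)
    show "0 \<le> s \<and> ?r s = c" using s by blast
  next
    fix x assume "0 \<le> x \<and> ?r x = c"
    then show "x = s" using uniq by blast
  qed
  then show ?thesis using s by (simp only:)
qed

lemma convex_comb_eq:
  fixes T :: "'a::real_normed_vector set"
  assumes "sum w T = 1" "(\<Sum>v\<in>T. w v *\<^sub>R v) = a"
  shows "(\<Sum>z\<in>T. w z *\<^sub>R (r - z)) = r - a"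
proof -
  have "(\<Sum>z\<in>T. w z *\<^sub>R (r - z)) = (\<Sum>z\<in>T. w z *\<^sub>R r) - (\<Sum>z\<in>T. w z *\<^sub>R z)"
    by (simp add: scaleR_diff_right sum_subtractf)
  also have "(\<Sum>z\<in>T. w z *\<^sub>R r) = (sum w T) *\<^sub>R r" by (simp add: scaleR_sum_left)
  finally show ?thesis using assms by simp
qed

lemma norm_comb_le:
  fixes T :: "'a::real_normed_vector set"
  assumes "\<forall>x\<in>T. 0 \<le> w x"
  shows "norm (\<Sum>z\<in>T. w z *\<^sub>R f z) \<le> (\<Sum>z\<in>T. w z * norm (f z))"
proof -
  have "norm (\<Sum>z\<in>T. w z *\<^sub>R f z) \<le> (\<Sum>z\<in>T. norm (w z *\<^sub>R f z))" by (rule norm_sum)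
  also have "\<dots> = (\<Sum>z\<in>T. w z * norm (f z))" by (rule sum.cong) (use assms in auto)
  finally show ?thesis .
qed

lemma dist_hull_le:
  fixes S :: "'a::real_normed_vector set"
  assumes "bounded S" "a \<in> convex hull S" "y \<in> S"
  shows "norm (y - a) \<le> diameter S"
proof -
  obtain T w where T: "finite T" "T \<subseteq> S" "\<forall>x\<in>T. 0 \<le> w x" "sum w T = 1" "(\<Sum>v\<in>T. w v *\<^sub>R v) = a"
    using assms(2) unfolding convex_hull_explicit by blast
  have "norm (y - a) = norm (\<Sum>z\<in>T. w z *\<^sub>R (y - z))" using convex_comb_eq[OF T(4,5)] by simp
  also have "\<dots> \<le> (\<Sum>z\<in>T. w z * norm (y - z))" by (rule norm_comb_le[OF T(3)])
  also have "\<dots> \<le> (\<Sum>z\<in>T. w z * diameter S)"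
  proof (rule sum_mono)
    fix z assume z: "z \<in> T"
    have "norm (y - z) \<le> diameter S"
      using diameter_bounded_bound[OF assms(1) assms(3)] z T(2) by (auto simp: dist_norm)
    then show "w z * norm (y - z) \<le> w z * diameter S" using T(3) z by (simp add: mult_left_mono)
  qed
  also have "\<dots> = diameter S" using T(4) by (simp add: sum_distrib_right[symmetric])
  finally show ?thesis .
qed

lemma greedy_step:
  fixes S :: "'a::real_normed_vector set"
  assumes a: "a \<in> convex hull S" and r: "r \<noteq> 0"
   and D: "\<And>y. y \<in> S \<Longrightarrow> norm (y - a) \<le> D"
  shows "\<exists>s\<in>S. norm (r + (s - a)) \<le> norm r * (1 + 2 * modulus_smoothness TYPE('a) (D / norm r))"
proof -
  obtain T w where T: "finite T" "T \<subseteq> S" "\<forall>x\<in>T. 0 \<le> w x" "sum w T = 1" "(\<Sum>v\<in>T. w v *\<^sub>R v) = a"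
    using a unfolding convex_hull_explicit by blast
  have Tne: "T \<noteq> {}" using T(4) by auto
  define f where "f y = norm (r + (y - a))" for y
  have "Min (f ` T) \<in> f ` T" using T(1) Tne by simp
  then obtain y0 where y0: "y0 \<in> T" "f y0 = Min (f ` T)" by auto
  have y0min: "f y0 \<le> f y" if "y \<in> T" for y using y0(2) T(1) that by simp
  let ?R = "modulus_smoothness TYPE('a) (D / norm r)"
  have key: "f y \<le> 2 * norm r * (1 + ?R) - norm (r - (y - a))" if y: "y \<in> T" for y
  proof -
    have yS: "y \<in> S" using y T(2) by auto
    have "modulus_smoothness TYPE('a) (norm (y - a) / norm r) \<le> ?R"
      by (rule ms_mono[OF r]) (use D[OF yS] r in \<open>auto simp: divide_right_mono\<close>)
    then have "2 * norm r * (1 + modulus_smoothness TYPE('a) (norm (y - a) / norm r)) \<le> 2 * norm r * (1 + ?R)"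
      by (simp add: mult_left_mono)
    moreover have "norm (r + (y - a)) + norm (r - (y - a)) \<le> 2 * norm r * (1 + modulus_smoothness TYPE('a) (norm (y - a) / norm r))"
      by (rule ms_key[OF r])
    ultimately show ?thesis unfolding f_def by linarith
  qed
  have "f y0 = (\<Sum>y\<in>T. w y * f y0)" using T(4) by (simp add: sum_distrib_right[symmetric])
  also have "\<dots> \<le> (\<Sum>y\<in>T. w y * f y)"
    by (rule sum_mono) (use y0min T(3) in \<open>simp add: mult_left_mono\<close>)
  also have "\<dots> \<le> (\<Sum>y\<in>T. w y * (2 * norm r * (1 + ?R) - norm (r - (y - a))))"
    by (rule sum_mono) (use key T(3) in \<open>simp add: mult_left_mono\<close>)
  also have "\<dots> = 2 * norm r * (1 + ?R) - (\<Sum>y\<in>T. w y * norm (r - (y - a)))"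
    using T(4) by (simp add: right_diff_distrib sum_subtractf sum_distrib_right[symmetric])
  also have "\<dots> \<le> 2 * norm r * (1 + ?R) - norm r"
  proof -
    have e: "(\<Sum>z\<in>T. w z *\<^sub>R ((r + a) - z)) = r" using convex_comb_eq[OF T(4,5), of "r + a"] by simp
    have "norm (\<Sum>z\<in>T. w z *\<^sub>R ((r + a) - z)) \<le> (\<Sum>z\<in>T. w z * norm ((r + a) - z))"
      by (rule norm_comb_le[OF T(3)])
    then have "norm r \<le> (\<Sum>z\<in>T. w z * norm ((r + a) - z))" unfolding e .
    moreover have "(\<Sum>z\<in>T. w z * norm ((r + a) - z)) = (\<Sum>z\<in>T. w z * norm (r - (z - a)))"
      by (simp add: algebra_simps)
    ultimately show ?thesis by linarith
  qed
  also have "\<dots> = norm r * (1 + 2 * ?R)" by (simp add: algebra_simps)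
  finally show ?thesis using y0(1) T(2) unfolding f_def by blast
qed

lemma power_bound_exp2:
  fixes k :: nat assumes "1 \<le> k"
  shows "(1 + 2 / real k) ^ k \<le> exp 2"
proof -
  have "(1 + 2 / real k) ^ k \<le> exp (2 / real k) ^ k"
    by (rule power_mono) (use assms in auto)
  also have "\<dots> = exp (real k * (2 / real k))" by (rule exp_of_nat_mult[symmetric])
  also have "real k * (2 / real k) = 2" using assms by simp
  then have "exp (real k * (2 / real k)) = exp 2" by simp
  finally show ?thesis .
qed

theorem theorem1:
  fixes S :: "'a::banach set" and a :: 'a
  assumes "uniformly_smooth TYPE('a)"
    and "S \<noteq> {}" and "bounded S"
    and "a \<in> convex hull S"
  shows "\<exists>x :: nat \<Rightarrow> 'a. (\<forall>i\<ge>1. x i \<in> S) \<and>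
           (\<forall>k::nat\<ge>1. norm (a - (1 / real k) *\<^sub>R (\<Sum>i=1..k. x i))
               \<le> 2 * exp 2 / (real k * modulus_smoothness_inv TYPE('a) (1 / real k)) * diameter S)"
proof -
  let ?\<rho> = "modulus_smoothness TYPE('a)"
  define D where "D = diameter S"
  have D0: "0 \<le> D" unfolding D_def by (rule diameter_ge_0[OF assms(3)])
  have Dy: "norm (y - a) \<le> D" if "y \<in> S" for y
    unfolding D_def by (rule dist_hull_le[OF assms(3) assms(4) that])
  show ?thesis
  proof (cases "D = 0")
    case True
    obtain s where s: "s \<in> S" using assms(2) by blast
    have "a = s" using Dy[OF s] True by simp
    then have aS: "a \<in> S" using s by simp
    show ?thesis
    proof (intro exI[of _ "\<lambda>_. a"] conjI allI impI)
      fix k :: nat assume k: "1 \<le> k"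
      have "(\<Sum>i=1..k. a) = real k *\<^sub>R a" using sum_constant_scaleR[of a "{1..k}"] by simp
      then have "a - (1 / real k) *\<^sub>R (\<Sum>i=1..k. a) = 0" using k by simp
      then show "norm (a - (1 / real k) *\<^sub>R (\<Sum>i=1..k. a))
               \<le> 2 * exp 2 / (real k * modulus_smoothness_inv TYPE('a) (1 / real k)) * diameter S"
        using True by (simp add: D_def)
    qed (use aS in auto)
  next
    case False
    then have Dpos: "0 < D" using D0 by simp
    obtain s0 where s0: "s0 \<in> S" "s0 \<noteq> a"
    proof (rule ccontr)
      assume "\<not> thesis"
      then have "S \<subseteq> {a}" using that by blast
      then have "S = {a}" using assms(2) by blast
      then show False using False by (simp add: D_def)
    qed
    define u where "u = s0 - a"
    have u: "u \<noteq> 0" using s0 by (simp add: u_def)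
    define P where "P r s \<longleftrightarrow> s \<in> S \<and> (r \<noteq> 0 \<longrightarrow> norm (r + (s - a)) \<le> norm r * (1 + 2 * ?\<rho> (D / norm r)))" for r s
    define g where "g r = (SOME s. P r s)" for r
    have g: "P r (g r)" for r
    proof -
      have "\<exists>s. P r s"
      proof (cases "r = 0")
        case True then show ?thesis using s0 by (auto simp: P_def)
      next
        case False
        then show ?thesis using greedy_step[OF assms(4) False Dy] by (auto simp: P_def)
      qed
      then show ?thesis unfolding g_def by (rule someI_ex)
    qed
    define rr where "rr = rec_nat 0 (\<lambda>_ r. r + (g r - a))"
    have rr0: "rr 0 = 0" by (simp add: rr_def)
    have rrS: "rr (Suc i) = rr i + (g (rr i) - a)" for i by (simp add: rr_def)
    define x where "x i = g (rr (i - 1))" for i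
    have xS: "x i \<in> S" for i using g[of "rr (i - 1)"] by (simp add: x_def P_def)
    have sumeq: "(\<Sum>i=1..k. x i) = rr k + real k *\<^sub>R a" for k
    proof (induction k)
      case 0 then show ?case by (simp add: rr0)
    next
      case (Suc k)
      have "(\<Sum>i=1..Suc k. x i) = (\<Sum>i=1..k. x i) + x (Suc k)" by simp
      also have "\<dots> = rr k + real k *\<^sub>R a + g (rr k)" using Suc by (simp add: x_def)
      also have "\<dots> = rr (Suc k) + real (Suc k) *\<^sub>R a" by (simp add: rrS algebra_simps)
      finally show ?case .
    qed
    have step1: "norm (rr (Suc i)) \<le> norm (rr i) + D" for i
    proof -
      have "norm (rr (Suc i)) \<le> norm (rr i) + norm (g (rr i) - a)"
        unfolding rrS by (rule norm_triangle_ineq)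
      moreover have "norm (g (rr i) - a) \<le> D" using Dy g[of "rr i"] by (simp add: P_def)
      ultimately show ?thesis by linarith
    qed
    have step2: "norm (rr (Suc i)) \<le> norm (rr i) * (1 + 2 * ?\<rho> (D / norm (rr i)))" if "rr i \<noteq> 0" for i
      using g[of "rr i"] that unfolding rrS P_def by blast
    show ?thesis
    proof (intro exI[of _ x] conjI allI impI)
      fix i :: nat show "x i \<in> S" by (rule xS)
    next
      fix k :: nat assume k: "1 \<le> k"
      define \<tau> where "\<tau> = modulus_smoothness_inv TYPE('a) (1 / real k)"
      have kpos: "0 < real k" using k by simp
      have \<tau>: "0 \<le> \<tau>" "?\<rho> \<tau> = 1 / real k" using ms_inv[OF u, of "1 / real k"] kpos by (simp_all add: \<tau>_def)
      have \<tau>pos: "0 < \<tau>"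
      proof (rule ccontr)
        assume "\<not> 0 < \<tau>"
        then have "\<tau> = 0" using \<tau>(1) by simp
        then show False using \<tau>(2) ms_zero[OF u] kpos by simp
      qed
      have \<tau>le: "\<tau> \<le> 1 + 1 / real k" using ms_lower(1)[OF u, of \<tau>] \<tau> by simp
      define L where "L = D / \<tau>"
      define q where "q = 1 + 2 / real k"
      have Lpos: "0 < L" using Dpos \<tau>pos by (simp add: L_def)
      have q1: "1 \<le> q" using kpos by (simp add: q_def)
      have bound: "norm (rr m) \<le> (L + D) * q ^ (m - 1)" for m
      proof (induction m)
        case 0
        have "0 \<le> (L + D) * q ^ (0 - 1)" using Lpos D0 q1 by simp
        then show ?case by (simp add: rr0)
      next
        case (Suc m)
        have qm: "1 \<le> q ^ m" using q1 by (rule one_le_power)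
        show ?case
        proof (cases "norm (rr m) < L")
          case True
          have "norm (rr (Suc m)) \<le> L + D" using step1[of m] True by linarith
          also have "\<dots> = (L + D) * 1" by simp
          also have "\<dots> \<le> (L + D) * q ^ m" by (rule mult_left_mono[OF qm]) (use Lpos D0 in linarith)
          finally show ?thesis by simp
        next
          case False
          then have nL: "L \<le> norm (rr m)" by simp
          then have npos: "0 < norm (rr m)" using Lpos by linarith
          then have rne: "rr m \<noteq> 0" by simp
          have m0: "m \<noteq> 0"
          proof
            assume "m = 0" then show False using rne rr0 by simp
          qed
          have "D \<le> norm (rr m) * \<tau>" using nL \<tau>pos by (simp add: L_def divide_le_eq)
          then have "D / norm (rr m) \<le> \<tau>" using npos by (simp add: divide_le_eq mult.commute)
          then have "?\<rho> (D / norm (rr m)) \<le> ?\<rho> \<tau>"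
            by (rule ms_mono[OF u, rotated]) (use D0 npos in simp)
          then have "1 + 2 * ?\<rho> (D / norm (rr m)) \<le> q" using \<tau>(2) by (simp add: q_def)
          then have "norm (rr m) * (1 + 2 * ?\<rho> (D / norm (rr m))) \<le> norm (rr m) * q"
            by (rule mult_left_mono) simp
          then have "norm (rr (Suc m)) \<le> norm (rr m) * q" using step2[OF rne] by linarith
          also have "\<dots> \<le> (L + D) * q ^ (m - 1) * q"
            by (rule mult_right_mono[OF Suc.IH]) (use q1 in simp)
          also have "\<dots> = (L + D) * q ^ m" using m0
            by (metis Suc_pred' mult.assoc neq0_conv power_Suc2)
          finally show ?thesis by simp
        qed
      qed
      have qk: "q ^ k \<le> exp 2" unfolding q_def by (rule power_bound_exp2[OF k])
      have "norm (rr k) \<le> (L + D) * q ^ (k - 1)" by (rule bound)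
      also have "(L + D) = (D / \<tau>) * (1 + \<tau>)" using \<tau>pos by (simp add: L_def field_simps)
      also have "(D / \<tau>) * (1 + \<tau>) * q ^ (k - 1) \<le> (D / \<tau>) * (2 * q) * q ^ (k - 1)"
      proof -
        have "1 / real k \<le> 4 / real k" using kpos by (simp add: divide_right_mono)
        then have "1 + \<tau> \<le> 2 * q" using \<tau>le kpos by (simp add: q_def)
        moreover have "0 \<le> D / \<tau>" using D0 \<tau>pos by simp
        moreover have "0 \<le> q ^ (k - 1)" using q1 by simp
        ultimately show ?thesis by (intro mult_right_mono mult_left_mono)
      qed
      also have "(D / \<tau>) * (2 * q) * q ^ (k - 1) = 2 * (D / \<tau>) * q ^ k"
      proof -
        obtain j where j: "k = Suc j" using k by (cases k) auto
        show ?thesis unfolding j by (simp add: mult_ac)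
      qed
      also have "\<dots> \<le> 2 * (D / \<tau>) * exp 2" by (rule mult_left_mono[OF qk]) (use D0 \<tau>pos in simp)
      finally have nk: "norm (rr k) \<le> 2 * (D / \<tau>) * exp 2" .
      have "a - (1 / real k) *\<^sub>R (\<Sum>i=1..k. x i) = - ((1 / real k) *\<^sub>R rr k)"
        unfolding sumeq using kpos by (simp add: scaleR_add_right)
      then have "norm (a - (1 / real k) *\<^sub>R (\<Sum>i=1..k. x i)) = norm (rr k) / real k"
        using kpos by simp
      also have "\<dots> \<le> 2 * (D / \<tau>) * exp 2 / real k" by (rule divide_right_mono[OF nk]) simp
      also have "\<dots> = 2 * exp 2 / (real k * \<tau>) * D" by (simp add: field_simps)
      finally show "norm (a - (1 / real k) *\<^sub>R (\<Sum>i=1..k. x i))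
               \<le> 2 * exp 2 / (real k * modulus_smoothness_inv TYPE('a) (1 / real k)) * diameter S"
        by (simp add: \<tau>_def D_def)
    qed
  qed
qed

end
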